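(* Let $\mathbb{R}^n$ and $\mathbb{R}^m$ be equipped with arbitrary norms $\|\cdot\|$, with dual norms $\|\cdot\|_*$, and let $g:\mathbb{R}^n\to\mathbb{R}^m$, $y\in\mathbb{R}^m$, $\rho>0$, $L\ge 0$, $\mu>0$. Let $B=\{x\in\mathbb{R}^n:\|x\|\le\rho\}$. Assume: (A) $g(0)=0$, $g$ is differentiable in $B$, and $\|g'(x^a)-g'(x^b)\|\le L\|x^a-x^b\|$ for all $x^a,x^b\in B$; (B) for all $x\in B$ and all $h\in\mathbb{R}^m$, $\|g'(x)^T h\|_*\ge \mu\|h\|_*$; (C) $\|y\|<\mu\rho$. Then there exists a solution $x^*$ of $g(x)=y$ with $\|x^*\|\le \frac{\|y\|}{\mu}$.
   Context: For a vector $c$, the dual norm is $\|c\|_*=\sup_{\|x\|=1}(c,x)$. The norm of the matrix $g'(x)$ (a linear map $\mathbb{R}^n\to\mathbb{R}^m$) is the operator norm subordinate to the chosen vector norms on $\mathbb{R}^n$ and $\mathbb{R}^m$. *)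

theory Defs
  imports "HOL-Analysis.Analysis"
begin

definition is_norm :: "('a::real_vector \<Rightarrow> real) \<Rightarrow> bool" where
  "is_norm N \<longleftrightarrow>
     (\<forall>x. N x \<ge> 0) \<and> (\<forall>x. N x = 0 \<longleftrightarrow> x = 0) \<and>
     (\<forall>c x. N (c *\<^sub>R x) = \<bar>c\<bar> * N x) \<and>
     (\<forall>x y. N (x + y) \<le> N x + N y)"

definition dual_norm :: "('a::real_inner \<Rightarrow> real) \<Rightarrow> 'a \<Rightarrow> real" where
  "dual_norm N c = Sup {c \<bullet> x | x. N x = 1}"

definition op_norm :: "('a \<Rightarrow> real) \<Rightarrow> ('b \<Rightarrow> real) \<Rightarrow> ('a \<Rightarrow> 'b) \<Rightarrow> real" where
  "op_norm N1 N2 A = Sup {N2 (A x) | x. N1 x = 1}"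

end

theory Submission
  imports Defs "HOL-Analysis.Analysis"
begin

lemma isn_0: "is_norm N \<Longrightarrow> N 0 = 0" unfolding is_norm_def by auto
lemma isn_ge: "is_norm N \<Longrightarrow> N x \<ge> 0" unfolding is_norm_def by auto
lemma isn_eq0: "is_norm N \<Longrightarrow> N x = 0 \<longleftrightarrow> x = 0" unfolding is_norm_def by auto
lemma isn_scale: "is_norm N \<Longrightarrow> N (c *\<^sub>R x) = \<bar>c\<bar> * N x" unfolding is_norm_def by auto
lemma isn_tri: "is_norm N \<Longrightarrow> N (x + y) \<le> N x + N y" unfolding is_norm_def by auto
lemma isn_minus: "is_norm N \<Longrightarrow> N (- x) = N x"
  using isn_scale[of N "-1" x] by simp
lemma isn_diff_tri: "is_norm N \<Longrightarrow> \<bar>N x - N y\<bar> \<le> N (x - y)"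
proof -
  assume n: "is_norm N"
  have "N x \<le> N (x - y) + N y" using isn_tri[OF n, of "x-y" y] by simp
  moreover have "N y \<le> N (y - x) + N x" using isn_tri[OF n, of "y-x" x] by simp
  moreover have "N (y - x) = N (x - y)" using isn_minus[OF n, of "x - y"] by simp
  ultimately show ?thesis by linarith
qed
lemma isn_sum: assumes n: "is_norm N" shows "finite A \<Longrightarrow> N (sum f A) \<le> sum (\<lambda>i. N (f i)) A"
proof (induction A rule: finite_induct)
  case empty then show ?case by (simp add: isn_0[OF n])
next
  case (insert a A)
  then show ?case using isn_tri[OF n, of "f a" "sum f A"] by simp
qed

lemma isn_upper:
  fixes N :: "'a::euclidean_space \<Rightarrow> real"
  assumes n: "is_norm N"
  shows "\<exists>C>0. \<forall>x. N x \<le> C * norm x"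
proof -
  define C where "C = (\<Sum>b\<in>Basis. N b) + 1"
  have C0: "C > 0" unfolding C_def using isn_ge[OF n] by (metis add_nonneg_pos sum_nonneg zero_less_one)
  have "N x \<le> C * norm x" for x
  proof -
    have "N x = N (\<Sum>b\<in>Basis. (x \<bullet> b) *\<^sub>R b)" by (simp add: euclidean_representation)
    also have "\<dots> \<le> (\<Sum>b\<in>Basis. N ((x \<bullet> b) *\<^sub>R b))" by (rule isn_sum[OF n]) simp
    also have "\<dots> = (\<Sum>b\<in>Basis. \<bar>x \<bullet> b\<bar> * N b)" by (simp add: isn_scale[OF n])
    also have "\<dots> \<le> (\<Sum>b\<in>Basis. norm x * N b)"
      by (intro sum_mono mult_right_mono) (auto simp: Basis_le_norm isn_ge[OF n])
    also have "\<dots> = norm x * (\<Sum>b\<in>Basis. N b)" by (simp add: sum_distrib_left)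
    also have "\<dots> \<le> C * norm x" unfolding C_def by (simp add: algebra_simps)
    finally show ?thesis .
  qed
  with C0 show ?thesis by blast
qed

lemma isn_cont:
  fixes N :: "'a::euclidean_space \<Rightarrow> real"
  assumes n: "is_norm N"
  shows "continuous_on S N"
proof -
  obtain C where C: "C > 0" "\<And>x. N x \<le> C * norm x" using isn_upper[OF n] by blast
  show ?thesis unfolding continuous_on_iff
  proof (intro ballI allI impI)
    fix x e assume "x \<in> S" "(e::real) > 0"
    show "\<exists>d>0. \<forall>x'\<in>S. dist x' x < d \<longrightarrow> dist (N x') (N x) < e"
    proof (intro exI[of _ "e / C"] conjI ballI impI)
      show "e / C > 0" using C \<open>e>0\<close> by simp
      fix x' assume "dist x' x < e / C"
      then have "C * norm (x' - x) < e" using C by (simp add: dist_norm field_simps)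
      moreover have "dist (N x') (N x) \<le> C * norm (x' - x)"
        using isn_diff_tri[OF n, of x' x] C(2)[of "x' - x"] by (simp add: dist_real_def)
      ultimately show "dist (N x') (N x) < e" by linarith
    qed
  qed
qed

lemma isn_lower:
  fixes N :: "'a::euclidean_space \<Rightarrow> real"
  assumes n: "is_norm N"
  shows "\<exists>c>0. \<forall>x. c * norm x \<le> N x"
proof -
  have cpt: "compact (sphere (0::'a) 1)" by simp
  obtain b :: 'a where b: "b \<in> Basis" using nonempty_Basis by blast
  have ne: "sphere (0::'a) 1 \<noteq> {}" using b by (auto simp: norm_Basis)
  obtain x0 where x0: "x0 \<in> sphere 0 1" "\<And>y. y \<in> sphere 0 1 \<Longrightarrow> N x0 \<le> N y"
    using continuous_attains_inf[OF cpt ne isn_cont[OF n]] by blast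
  have c0: "N x0 > 0" using x0(1) isn_eq0[OF n, of x0] isn_ge[OF n, of x0] by auto
  have "N x0 * norm x \<le> N x" for x
  proof (cases "x = 0")
    case True then show ?thesis by (simp add: isn_0[OF n])
  next
    case False
    have "N x0 \<le> N ((1 / norm x) *\<^sub>R x)" using x0(2)[of "(1 / norm x) *\<^sub>R x"] False by simp
    also have "\<dots> = N x / norm x" using isn_scale[OF n, of "1 / norm x" x] by simp
    finally show ?thesis using False by (simp add: field_simps)
  qed
  with c0 show ?thesis by blast
qed


lemma isn_unit_exists:
  fixes N :: "'a::euclidean_space \<Rightarrow> real"
  assumes n: "is_norm N" shows "\<exists>u. N u = 1"
proof -
  obtain b :: 'a where b: "b \<in> Basis" using nonempty_Basis by blast
  then have "b \<noteq> 0" by auto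
  then have "N b > 0" using isn_eq0[OF n, of b] isn_ge[OF n, of b] by auto
  then have "N ((1 / N b) *\<^sub>R b) = 1" using isn_scale[OF n, of "1 / N b" b] by simp
  then show ?thesis by blast
qed

lemma dual_bdd:
  fixes N :: "'a::euclidean_space \<Rightarrow> real"
  assumes n: "is_norm N" shows "bdd_above {c \<bullet> x | x. N x = 1}"
proof -
  obtain k where k: "k > 0" "\<And>x. k * norm x \<le> N x" using isn_lower[OF n] by blast
  have "c \<bullet> x \<le> norm c / k" if "N x = 1" for x
  proof -
    have "norm x \<le> 1 / k" using k(2)[of x] that k(1) by (simp add: field_simps)
    then have "norm c * norm x \<le> norm c * (1 / k)" using mult_left_mono[OF _ norm_ge_zero[of c]] by blast
    then show ?thesis using norm_cauchy_schwarz[of c x] by simp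
  qed
  then show ?thesis unfolding bdd_above_def by blast
qed

lemma dual_nonneg:
  fixes N :: "'a::euclidean_space \<Rightarrow> real"
  assumes n: "is_norm N" shows "dual_norm N c \<ge> 0"
proof -
  obtain u where u: "N u = 1" using isn_unit_exists[OF n] by blast
  have u': "N (-u) = 1" using u isn_minus[OF n] by simp
  have "c \<bullet> u \<le> dual_norm N c" unfolding dual_norm_def
    by (rule cSup_upper[OF _ dual_bdd[OF n]]) (use u in blast)
  moreover have "c \<bullet> (-u) \<le> dual_norm N c" unfolding dual_norm_def
    by (rule cSup_upper[OF _ dual_bdd[OF n]]) (use u' in blast)
  ultimately show ?thesis by simp
qed

lemma dual_le:
  fixes N :: "'a::euclidean_space \<Rightarrow> real"
  assumes n: "is_norm N" and x: "N x \<le> 1" shows "c \<bullet> x \<le> dual_norm N c"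
proof (cases "x = 0")
  case True then show ?thesis using dual_nonneg[OF n] by simp
next
  case False
  then have p: "N x > 0" using isn_eq0[OF n, of x] isn_ge[OF n, of x] by auto
  have u: "N ((1 / N x) *\<^sub>R x) = 1" using isn_scale[OF n, of "1 / N x" x] p by simp
  have "c \<bullet> ((1 / N x) *\<^sub>R x) \<le> dual_norm N c" unfolding dual_norm_def
    by (rule cSup_upper[OF _ dual_bdd[OF n]]) (use u in blast)
  then have "c \<bullet> x \<le> N x * dual_norm N c" using p by (simp add: field_simps)
  also have "\<dots> \<le> dual_norm N c" using x dual_nonneg[OF n, of c] isn_ge[OF n, of x]
    by (simp add: mult_left_le_one_le)
  finally show ?thesis .
qed

lemma dual_least:
  fixes N :: "'a::euclidean_space \<Rightarrow> real"
  assumes n: "is_norm N" and b: "\<And>x. N x \<le> 1 \<Longrightarrow> c \<bullet> x \<le> B" shows "dual_norm N c \<le> B"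
  unfolding dual_norm_def
proof (rule cSup_least)
  show "{c \<bullet> x |x. N x = 1} \<noteq> {}" using isn_unit_exists[OF n] by blast
qed (use b in auto)

lemma ball_compact:
  fixes N :: "'a::euclidean_space \<Rightarrow> real"
  assumes n: "is_norm N" shows "compact {v. N v \<le> r}"
proof -
  obtain k where k: "k > 0" "\<And>x. k * norm x \<le> N x" using isn_lower[OF n] by blast
  have "bounded {v. N v \<le> r}" unfolding bounded_iff
  proof (intro exI[of _ "r / k"] ballI)
    fix x assume "x \<in> {v. N v \<le> r}"
    then show "norm x \<le> r / k" using k(2)[of x] k(1) by (simp add: field_simps)
  qed
  moreover have "closed {v. N v \<le> r}"
    by (rule closed_Collect_le[OF isn_cont[OF n]]) simp
  ultimately show ?thesis using compact_eq_bounded_closed by blast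
qed

lemma surj_bound:
  fixes A :: "real^'n \<Rightarrow> real^'m" and N1 :: "real^'n \<Rightarrow> real" and N2 :: "real^'m \<Rightarrow> real"
  assumes N1: "is_norm N1" and N2: "is_norm N2" and lin: "linear A" and mu: "\<mu> > 0"
    and reg: "\<And>h. dual_norm N1 (transpose (matrix A) *v h) \<ge> \<mu> * dual_norm N2 h"
  shows "\<exists>v. A v = z \<and> N1 v \<le> N2 z / \<mu>"
proof (cases "z = 0")
  case True
  then show ?thesis using linear_0[OF lin] isn_0[OF N1] isn_0[OF N2] by (intro exI[of _ 0]) simp
next
  case False
  then have pz: "N2 z > 0" using isn_eq0[OF N2, of z] isn_ge[OF N2, of z] by auto
  define K where "K = A ` {v. N1 v \<le> 1}"
  define w where "w = (\<mu> / N2 z) *\<^sub>R z"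
  have cvx: "convex {v. N1 v \<le> 1}" unfolding convex_def
  proof (intro ballI allI impI, simp only: mem_Collect_eq)
    fix x y :: "real^'n" and u v :: real
    assume h: "N1 x \<le> 1" "N1 y \<le> 1" "0 \<le> u" "0 \<le> v" "u + v = 1"
    have "N1 (u *\<^sub>R x + v *\<^sub>R y) \<le> N1 (u *\<^sub>R x) + N1 (v *\<^sub>R y)" by (rule isn_tri[OF N1])
    also have "\<dots> = u * N1 x + v * N1 y" using h by (simp add: isn_scale[OF N1])
    also have "\<dots> \<le> u * 1 + v * 1" using h by (intro add_mono mult_left_mono) auto
    finally show "N1 (u *\<^sub>R x + v *\<^sub>R y) \<le> 1" using h by simp
  qed
  have convK: "convex K" unfolding K_def by (rule convex_linear_image[OF lin cvx])
  have closK: "closed K" unfolding K_def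
    by (rule compact_imp_closed, rule compact_continuous_image[OF _ ball_compact[OF N1]])
       (rule linear_continuous_on, use lin linear_conv_bounded_linear in blast)
  have "w \<in> K"
  proof (rule ccontr)
    assume "w \<notin> K"
    then obtain a b where ab: "a \<bullet> w < b" "\<And>x. x \<in> K \<Longrightarrow> a \<bullet> x > b"
      using separating_hyperplane_closed_point[OF convK closK] by blast
    define h where "h = - a"
    have "dual_norm N1 (transpose (matrix A) *v h) \<le> - b"
    proof (rule dual_least[OF N1])
      fix x assume "N1 x \<le> 1"
      then have "A x \<in> K" unfolding K_def by blast
      then have "a \<bullet> A x > b" by (rule ab)
      moreover have "(transpose (matrix A) *v h) \<bullet> x = h \<bullet> A x"
        using dot_lmul_matrix[of h "matrix A" x] matrix_works[of A x] lin by simp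
      ultimately show "(transpose (matrix A) *v h) \<bullet> x \<le> - b" unfolding h_def by simp
    qed
    then have "\<mu> * dual_norm N2 h \<le> - b" using reg[of h] by linarith
    moreover have "h \<bullet> ((1 / N2 z) *\<^sub>R z) \<le> dual_norm N2 h"
      by (rule dual_le[OF N2]) (use pz in \<open>simp add: isn_scale[OF N2]\<close>)
    moreover have "h \<bullet> w = \<mu> * (h \<bullet> ((1 / N2 z) *\<^sub>R z))"
      unfolding w_def inner_scaleR_right by simp
    ultimately have "h \<bullet> w \<le> - b" using mu
      by (smt (verit) mult_left_mono)
    then show False using ab(1) unfolding h_def by simp
  qed
  then obtain v0 where v0: "N1 v0 \<le> 1" "A v0 = w" unfolding K_def by blast
  define v where "v = (N2 z / \<mu>) *\<^sub>R v0"
  have "A v = (N2 z / \<mu>) *\<^sub>R w" unfolding v_def using linear_scale[OF lin] v0(2) by simp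
  also have "\<dots> = ((N2 z / \<mu>) * (\<mu> / N2 z)) *\<^sub>R z" unfolding w_def by simp
  also have "(N2 z / \<mu>) * (\<mu> / N2 z) = 1" using pz mu by simp
  finally have c1: "A v = z" by simp
  have e1: "N1 v = (N2 z / \<mu>) * N1 v0" unfolding v_def using isn_scale[OF N1] pz mu by simp
  have e2: "(N2 z / \<mu>) * N1 v0 \<le> (N2 z / \<mu>) * 1"
    by (rule mult_left_mono[OF v0(1)]) (use pz mu in simp)
  from c1 e1 e2 show ?thesis by (intro exI[of _ v]) simp
qed


lemma ekeland_sol:
  fixes N1 :: "real^'n \<Rightarrow> real" and N2 :: "real^'m \<Rightarrow> real"
    and g :: "real^'n \<Rightarrow> real^'m" and g' :: "real^'n \<Rightarrow> real^'n \<Rightarrow> real^'m"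
    and y :: "real^'m" and \<rho> \<mu> \<epsilon> :: real
  assumes N1: "is_norm N1" and N2: "is_norm N2"
    and rho: "\<rho> > 0" and mu: "\<mu> > 0"
    and g0: "g 0 = 0"
    and deriv: "\<And>x. N1 x \<le> \<rho> \<Longrightarrow> (g has_derivative g' x) (at x)"
    and reg: "\<And>x h. N1 x \<le> \<rho> \<Longrightarrow>
                dual_norm N1 (transpose (matrix (g' x)) *v h) \<ge> \<mu> * dual_norm N2 h"
    and eps: "0 < \<epsilon>" "\<epsilon> < \<mu>" "N2 y < \<epsilon> * \<rho>"
  shows "\<exists>x. N1 x \<le> \<rho> \<and> g x = y \<and> N1 x \<le> N2 y / \<epsilon>"
proof -
  define B where "B = {x. N1 x \<le> \<rho>}"
  have cptB: "compact B" unfolding B_def by (rule ball_compact[OF N1])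
  have clB: "closed B" using cptB compact_imp_closed by blast
  have contg: "continuous_on B g"
    by (rule continuous_at_imp_continuous_on)
       (auto simp: B_def intro: has_derivative_continuous[OF deriv])
  define \<Phi> where "\<Phi> x = N2 (g x - y)" for x
  have contP: "continuous_on B \<Phi>" unfolding \<Phi>_def
    by (rule continuous_on_compose2[OF isn_cont[OF N2] continuous_on_diff[OF contg continuous_on_const]])
       (rule subset_refl)
  define F where "F x = \<Phi> x + \<epsilon> * N1 x" for x
  have contF: "continuous_on B F" unfolding F_def
    by (intro continuous_on_add contP continuous_on_mult continuous_on_const isn_cont[OF N1])
  define S where "S = B \<inter> F -` {..N2 y}"
  have clS: "closed S" unfolding S_def by (rule continuous_closed_preimage[OF contF clB]) simp
  have cptS: "compact S" using compact_Int_closed[OF cptB clS] unfolding S_def by (simp add: Int_absorb1)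
  have Phi0: "\<Phi> 0 = N2 y" unfolding \<Phi>_def using g0 isn_minus[OF N2, of y] by simp
  have "0 \<in> S" unfolding S_def B_def F_def using Phi0 isn_0[OF N1] rho by simp
  then have neS: "S \<noteq> {}" by blast
  have SB: "S \<subseteq> B" unfolding S_def by blast
  obtain xb where xb: "xb \<in> S" and xbmin: "\<And>x. x \<in> S \<Longrightarrow> \<Phi> xb \<le> \<Phi> x"
    using continuous_attains_inf[OF cptS neS continuous_on_subset[OF contP SB]] by blast
  have xbF: "\<Phi> xb + \<epsilon> * N1 xb \<le> N2 y" using xb unfolding S_def F_def by simp
  have Pge: "\<Phi> x \<ge> 0" for x unfolding \<Phi>_def by (rule isn_ge[OF N2])
  have xbn: "N1 xb \<le> N2 y / \<epsilon>"
  proof -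
    have "\<epsilon> * N1 xb \<le> N2 y" using xbF Pge[of xb] by linarith
    then show ?thesis using eps(1) by (simp add: field_simps)
  qed
  have xbr: "N1 xb < \<rho>"
  proof -
    have "N2 y / \<epsilon> < \<rho>" using eps by (simp add: field_simps)
    then show ?thesis using xbn by linarith
  qed
  have key: "x = xb" if xB: "N1 x \<le> \<rho>" and le: "\<Phi> x + \<epsilon> * N1 (x - xb) \<le> \<Phi> xb" for x
  proof -
    have tri: "N1 x \<le> N1 (x - xb) + N1 xb" using isn_tri[OF N1, of "x - xb" xb] by simp
    have "\<epsilon> * N1 x \<le> \<epsilon> * (N1 (x - xb) + N1 xb)" using tri eps(1) by (intro mult_left_mono) auto
    then have "F x \<le> N2 y" unfolding F_def using le xbF by (simp add: distrib_left)
    then have "x \<in> S" unfolding S_def B_def using xB by simp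
    then have "\<Phi> xb \<le> \<Phi> x" by (rule xbmin)
    then have "\<epsilon> * N1 (x - xb) \<le> 0" using le by linarith
    then have "N1 (x - xb) \<le> 0" using eps(1) by (simp add: mult_le_0_iff)
    then have "N1 (x - xb) = 0" using isn_ge[OF N1, of "x - xb"] by linarith
    then show ?thesis using isn_eq0[OF N1, of "x - xb"] by simp
  qed
  have "g xb = y"
  proof (rule ccontr)
    assume ne: "g xb \<noteq> y"
    define z where "z = y - g xb"
    have z0: "z \<noteq> 0" using ne unfolding z_def by simp
    have pz: "N2 z > 0" using isn_eq0[OF N2, of z] isn_ge[OF N2, of z] z0 by auto
    have Pxb: "\<Phi> xb = N2 z" unfolding \<Phi>_def z_def using isn_minus[OF N2, of "y - g xb"] by simp
    define A where "A = g' xb"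
    have dA: "(g has_derivative A) (at xb)" unfolding A_def using deriv xbr by simp
    have linA: "linear A" using has_derivative_linear[OF dA] .
    obtain v where v: "A v = z" "N1 v \<le> N2 z / \<mu>"
      using surj_bound[OF N1 N2 linA mu, of z] reg[of xb] xbr unfolding A_def by auto
    have v0: "v \<noteq> 0" using v(1) z0 linear_0[OF linA] by auto
    have nv: "norm v > 0" using v0 by simp
    have N1v: "N1 v > 0" using isn_eq0[OF N1, of v] isn_ge[OF N1, of v] v0 by auto
    obtain C2 where C2: "C2 > 0" "\<And>u. N2 u \<le> C2 * norm u" using isn_upper[OF N2] by blast
    define e where "e = N2 z * (1 - \<epsilon> / \<mu>) / (C2 * norm v)"
    have e0: "e > 0" unfolding e_def using pz eps mu C2(1) nv by (simp add: field_simps)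
    obtain d where d: "d > 0"
      "\<And>x'. norm (x' - xb) < d \<Longrightarrow> norm (g x' - g xb - A (x' - xb)) \<le> e * norm (x' - xb)"
      using dA e0 unfolding has_derivative_at_alt by blast
    define t where "t = min 1 (min (d / (2 * norm v)) ((\<rho> - N1 xb) / N1 v))"
    have t0: "t > 0" unfolding t_def using d(1) nv N1v xbr by simp
    have t1: "t \<le> 1" unfolding t_def by simp
    have t2: "t * norm v < d"
    proof -
      have "t \<le> d / (2 * norm v)" unfolding t_def by simp
      then have "t * norm v \<le> d / 2" using nv by (simp add: field_simps)
      then show ?thesis using d(1) by linarith
    qed
    have t3: "t * N1 v \<le> \<rho> - N1 xb"
    proof -
      have "t \<le> (\<rho> - N1 xb) / N1 v" unfolding t_def by simp
      then show ?thesis using N1v by (simp add: field_simps)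
    qed
    define x' where "x' = xb + t *\<^sub>R v"
    have dx: "x' - xb = t *\<^sub>R v" unfolding x'_def by simp
    have N1tv: "N1 (t *\<^sub>R v) = t * N1 v" using isn_scale[OF N1, of t v] t0 by simp
    have x'B: "N1 x' \<le> \<rho>" unfolding x'_def using isn_tri[OF N1, of xb "t *\<^sub>R v"] N1tv t3 by linarith
    have x'ne: "x' \<noteq> xb" using dx t0 v0 by auto
    have big: "\<Phi> x' + \<epsilon> * N1 (x' - xb) > \<Phi> xb" using key[OF x'B] x'ne by force
    define err where "err = g x' - g xb - A (x' - xb)"
    have nerr: "norm err \<le> e * (t * norm v)"
      using d(2)[of x'] t2 t0 unfolding err_def dx by simp
    have Atv: "A (x' - xb) = t *\<^sub>R z" unfolding dx using linear_scale[OF linA] v(1) by simp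
    have gx': "g x' - y = err + (1 - t) *\<^sub>R (- z)"
      unfolding err_def Atv z_def by (simp add: algebra_simps)
    have "\<Phi> x' \<le> N2 err + N2 ((1 - t) *\<^sub>R (- z))"
      unfolding \<Phi>_def gx' by (rule isn_tri[OF N2])
    also have "N2 ((1 - t) *\<^sub>R (- z)) = (1 - t) * N2 z"
      using isn_scale[OF N2, of "1 - t" "- z"] isn_minus[OF N2, of z] t1 by simp
    also have "N2 err \<le> C2 * (e * (t * norm v))"
      using C2(2)[of err] mult_left_mono[OF nerr, of C2] C2(1) by linarith
    also have "C2 * (e * (t * norm v)) = t * (N2 z * (1 - \<epsilon> / \<mu>))"
      unfolding e_def using C2(1) nv by (simp add: field_simps)
    finally have P1: "\<Phi> x' \<le> t * (N2 z * (1 - \<epsilon> / \<mu>)) + (1 - t) * N2 z" by simp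
    have P2: "\<epsilon> * N1 (x' - xb) \<le> t * (\<epsilon> * (N2 z / \<mu>))"
    proof -
      have "\<epsilon> * N1 (x' - xb) = t * (\<epsilon> * N1 v)" unfolding dx N1tv by simp
      also have "\<dots> \<le> t * (\<epsilon> * (N2 z / \<mu>))"
        using v(2) t0 eps(1) by (intro mult_left_mono) auto
      finally show ?thesis .
    qed
    have "t * (N2 z * (1 - \<epsilon> / \<mu>)) + (1 - t) * N2 z + t * (\<epsilon> * (N2 z / \<mu>)) = N2 z"
      using mu by (simp add: field_simps)
    then show False using big P1 P2 Pxb by linarith
  qed
  then show ?thesis using xbr xbn by (intro exI[of _ xb]) simp
qed


lemma half_lt: "(a::real) < b \<Longrightarrow> a < (a + b) / 2" by simp

theorem theorem1:
  fixes N1 :: "real^'n \<Rightarrow> real" and N2 :: "real^'m \<Rightarrow> real"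
    and g :: "real^'n \<Rightarrow> real^'m" and g' :: "real^'n \<Rightarrow> real^'n \<Rightarrow> real^'m"
    and y :: "real^'m" and \<rho> L \<mu> :: real
  assumes N1: "is_norm N1" and N2: "is_norm N2"
    and rho: "\<rho> > 0" and L: "L \<ge> 0" and mu: "\<mu> > 0"
    and g0: "g 0 = 0"
    and deriv: "\<And>x. N1 x \<le> \<rho> \<Longrightarrow> (g has_derivative g' x) (at x)"
    and lip: "\<And>xa xb. N1 xa \<le> \<rho> \<Longrightarrow> N1 xb \<le> \<rho> \<Longrightarrow>
                op_norm N1 N2 (\<lambda>v. g' xa v - g' xb v) \<le> L * N1 (xa - xb)"
    and reg: "\<And>x h. N1 x \<le> \<rho> \<Longrightarrow>
                dual_norm N1 (transpose (matrix (g' x)) *v h) \<ge> \<mu> * dual_norm N2 h"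
    and ysmall: "N2 y < \<mu> * \<rho>"
  shows "\<exists>xs. g xs = y \<and> N1 xs \<le> N2 y / \<mu>"
proof (cases "y = 0")
  case True
  then show ?thesis using g0 isn_0[OF N1] isn_0[OF N2] by (intro exI[of _ 0]) simp
next
  case False
  then have py: "N2 y > 0" using isn_eq0[OF N2, of y] isn_ge[OF N2, of y] by auto
  define \<epsilon>0 where "\<epsilon>0 = (N2 y / \<rho> + \<mu>) / 2"
  have yr: "N2 y / \<rho> < \<mu>" using ysmall rho by (simp add: field_simps)
  have e0p: "\<epsilon>0 > 0" unfolding \<epsilon>0_def using py rho mu by (simp add: add_pos_pos)
  have e0m: "\<epsilon>0 < \<mu>" unfolding \<epsilon>0_def using yr by simp
  have e0r: "N2 y < \<epsilon>0 * \<rho>"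
  proof -
    have "N2 y / \<rho> < \<epsilon>0" unfolding \<epsilon>0_def using yr half_lt[of "N2 y / \<rho>" \<mu>] by blast
    then show ?thesis using rho by (simp add: field_simps)
  qed
  have sol: "\<exists>x. N1 x \<le> \<rho> \<and> g x = y \<and> N1 x \<le> N2 y / \<epsilon>"
    if "\<epsilon>0 \<le> \<epsilon>" "\<epsilon> < \<mu>" for \<epsilon>
  proof (rule ekeland_sol[OF N1 N2 rho mu g0 deriv reg])
    show "0 < \<epsilon>" using that e0p by simp
    show "\<epsilon> < \<mu>" by fact
    have "\<epsilon>0 * \<rho> \<le> \<epsilon> * \<rho>" using that rho by (intro mult_right_mono) auto
    then show "N2 y < \<epsilon> * \<rho>" using e0r by linarith
  qed auto
  define B where "B = {x. N1 x \<le> \<rho>}"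
  have cptB: "compact B" unfolding B_def by (rule ball_compact[OF N1])
  have clB: "closed B" using cptB compact_imp_closed by blast
  have contg: "continuous_on B g"
    by (rule continuous_at_imp_continuous_on)
       (auto simp: B_def intro: has_derivative_continuous[OF deriv])
  define T where "T = {x \<in> B. g x = y}"
  have clT: "closed T" unfolding T_def by (rule continuous_closed_preimage_constant[OF contg clB])
  have cptT: "compact T" using compact_Int_closed[OF cptB clT] unfolding T_def
    by (simp add: Int_absorb1 subset_eq)
  have neT: "T \<noteq> {}" using sol[of \<epsilon>0] e0m unfolding T_def B_def by auto
  obtain xm where xm: "xm \<in> T" and xmin: "\<And>x. x \<in> T \<Longrightarrow> N1 xm \<le> N1 x"
    using continuous_attains_inf[OF cptT neT isn_cont[OF N1]] by blast
  have "N1 xm \<le> N2 y / \<mu>"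
  proof (rule ccontr)
    assume "\<not> N1 xm \<le> N2 y / \<mu>"
    then have gt: "N2 y / \<mu> < N1 xm" by simp
    then have pxm: "N1 xm > 0" using py mu by (smt (verit) divide_pos_pos)
    have q: "N2 y / N1 xm < \<mu>" using gt pxm mu by (simp add: field_simps)
    define \<epsilon> where "\<epsilon> = max \<epsilon>0 ((N2 y / N1 xm + \<mu>) / 2)"
    have em: "\<epsilon> < \<mu>" unfolding \<epsilon>_def using e0m q by simp
    have ee: "\<epsilon>0 \<le> \<epsilon>" unfolding \<epsilon>_def by simp
    have ep: "\<epsilon> > 0" using ee e0p by simp
    have "N2 y / N1 xm < \<epsilon>" unfolding \<epsilon>_def using half_lt[OF q] by (simp add: less_max_iff_disj)
    then have lt: "N2 y / \<epsilon> < N1 xm" using pxm ep by (simp add: field_simps)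
    obtain x where x: "N1 x \<le> \<rho>" "g x = y" "N1 x \<le> N2 y / \<epsilon>" using sol[OF ee em] by blast
    then have "x \<in> T" unfolding T_def B_def by simp
    then have "N1 xm \<le> N1 x" by (rule xmin)
    then show False using x(3) lt by linarith
  qed
  then show ?thesis using xm unfolding T_def by blast
qed

end
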